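(* Let $A\in\mathbb{C}^{n\times n}$ be nonsingular, $b\in\mathbb{C}^n$, $x_0\in\mathbb{C}^n$ and $r_0=b-Ax_0$. Let $W\in\mathbb{C}^{n\times k}$ have linearly independent columns spanning a subspace $\mathcal{W}$. Define $Q_3=W(W^HA^HAW)^{-1}W^H$, $P_4=I_n-Q_3A^HA$, $P_5=I_n-AQ_3A^H$, $\hat A=P_5A$, $\hat r_0=P_5r_0$, and let $\mathcal{K}=\mathcal{K}_m(\hat A,\hat r_0)$. Then the following two sets of conditions are equivalent: (i) $x_m\in x_0+\mathcal{W}+\mathcal{K}$ and $r_m=b-Ax_m\perp (A\mathcal{W}+A\mathcal{K})$; (ii) $\tilde x_m\in x_0+\mathcal{K}$ and $\tilde r_m:=P_5(b-A\tilde x_m)\perp A\mathcal{K}$, in the following sense: if $\tilde x_m$ satisfies (ii), then $x_m:=P_4\tilde x_m+Q_3A^Hb$ satisfies (i) and $r_m=\tilde r_m$; conversely, if $x_m$ satisfies (i), then there exists $\tilde x_m$ satisfying (ii) with $x_m=P_4\tilde x_m+Q_3A^Hb$ and $r_m=\tilde r_m$.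
   Context: $\mathcal{K}_m(B,v)=\mathrm{span}(v,Bv,\dots,B^{m-1}v)$ denotes the Krylov subspace. Orthogonality $\perp$ is with respect to the canonical Euclidean inner product $\langle x,y\rangle=y^Hx$ on $\mathbb{C}^n$; for subspaces $\mathcal{U}$, $A\mathcal{U}=\{Au: u\in\mathcal{U}\}$. ${}^H$ denotes conjugate transpose. *)

theory Defs
  imports "HOL-Analysis.Analysis"
begin

definition conj_transpose :: "complex^'n^'m \<Rightarrow> complex^'m^'n" where
  "conj_transpose M = (\<chi> i j. cnj (M $ j $ i))"

definition cinner :: "complex^'n \<Rightarrow> complex^'n \<Rightarrow> complex" where
  "cinner x y = (\<Sum>i\<in>UNIV. x $ i * cnj (y $ i))"

definition orth_to :: "complex^'n \<Rightarrow> (complex^'n) set \<Rightarrow> bool" where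
  "orth_to x S \<longleftrightarrow> (\<forall>y\<in>S. cinner x y = 0)"

definition krylov :: "nat \<Rightarrow> complex^'n^'n \<Rightarrow> complex^'n \<Rightarrow> (complex^'n) set" where
  "krylov m B v = vec.span {((\<lambda>x. B *v x) ^^ i) v | i. i < m}"

definition col_space :: "complex^'k^'n \<Rightarrow> (complex^'n) set" where
  "col_space W = {W *v y | y. True}"

definition set_plus_sub :: "(complex^'n) set \<Rightarrow> (complex^'n) set \<Rightarrow> (complex^'n) set" where
  "set_plus_sub U V = {u + v | u v. u \<in> U \<and> v \<in> V}"

definition mat_image :: "complex^'n^'m \<Rightarrow> (complex^'n) set \<Rightarrow> (complex^'m) set" where
  "mat_image A U = (\<lambda>u. A *v u) ` U"

end

theory Submission
  imports Defs
begin

lemma ct_cinner2: "cinner x (B *v y) = cinner (conj_transpose B *v x) y"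
  for B :: "complex^'n^'m"
proof -
  have "cinner x (B *v y) = (\<Sum>i\<in>UNIV. \<Sum>j\<in>UNIV. x $ i * cnj (B $ i $ j) * cnj (y $ j))"
    unfolding cinner_def matrix_vector_mult_def
    by (simp add: sum_distrib_left mult.assoc)
  also have "\<dots> = (\<Sum>j\<in>UNIV. \<Sum>i\<in>UNIV. x $ i * cnj (B $ i $ j) * cnj (y $ j))"
    by (rule sum.swap)
  also have "\<dots> = cinner (conj_transpose B *v x) y"
    unfolding cinner_def matrix_vector_mult_def conj_transpose_def
    by (simp add: sum_distrib_left sum_distrib_right mult_ac)
  finally show ?thesis .
qed

lemma cinner_self_zero: "cinner x x = 0 \<Longrightarrow> x = 0"
proof -
  assume h: "cinner x x = 0"
  have "cinner x x = of_real (\<Sum>i\<in>UNIV. (cmod (x$i))^2)"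
    by (simp only: cinner_def of_real_sum complex_norm_square)
  then have "complex_of_real (\<Sum>i\<in>UNIV. (cmod (x$i))^2) = 0"
    using h by (rule trans[OF sym])
  then have "(\<Sum>i\<in>UNIV. (cmod (x$i))^2) = 0" by (simp only: of_real_eq_0_iff)
  then have "\<forall>i\<in>UNIV. (cmod (x$i))^2 = 0"
    using sum_nonneg_eq_0_iff[of UNIV "\<lambda>i. (cmod (x$i))^2"] by simp
  then have "\<And>i. x $ i = 0" by simp
  then show "x = 0" by (simp add: vec_eq_iff)
qed

lemma cinner_add2: "cinner x (y + z) = cinner x y + cinner x z"
  by (simp add: cinner_def sum.distrib algebra_simps)

lemma cinner_zero1[simp]: "cinner 0 x = 0"
  by (simp add: cinner_def)

lemma cinner_zero2[simp]: "cinner x 0 = 0"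
  by (simp add: cinner_def)

lemma mv_assoc': "(B ** C) *v x = B *v (C *v x)"
  by (simp add: matrix_vector_mul_assoc)

lemma mv_diff1: "(B - C) *v x = B *v x - C *v (x :: 'a::ring_1^'n)"
  by (simp add: matrix_vector_mult_diff_rdistrib)

theorem proposition1:
  fixes A :: "complex^'n^'n" and W :: "complex^'k^'n"
    and b x0 :: "complex^'n" and m :: nat
  assumes "invertible A"
    and "\<forall>y. W *v y = 0 \<longrightarrow> y = 0"
  defines "r0 \<equiv> b - A *v x0"
    and "Q3 \<equiv> W ** matrix_inv (conj_transpose W ** conj_transpose A ** A ** W) ** conj_transpose W"
  defines "P4 \<equiv> mat 1 - Q3 ** conj_transpose A ** A"
    and "P5 \<equiv> mat 1 - A ** Q3 ** conj_transpose A"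
  defines "Ahat \<equiv> P5 ** A" and "rhat0 \<equiv> P5 *v r0"
  defines "K \<equiv> krylov m Ahat rhat0" and "Wsp \<equiv> col_space W"
  shows "(\<forall>xt. (xt \<in> (\<lambda>u. x0 + u) ` K \<and> orth_to (P5 *v (b - A *v xt)) (mat_image A K)) \<longrightarrow>
            (let xm = P4 *v xt + Q3 *v (conj_transpose A *v b) in
              xm \<in> (\<lambda>u. x0 + u) ` set_plus_sub Wsp K
              \<and> orth_to (b - A *v xm) (set_plus_sub (mat_image A Wsp) (mat_image A K))
              \<and> b - A *v xm = P5 *v (b - A *v xt)))
       \<and> (\<forall>xm. (xm \<in> (\<lambda>u. x0 + u) ` set_plus_sub Wsp K
               \<and> orth_to (b - A *v xm) (set_plus_sub (mat_image A Wsp) (mat_image A K))) \<longrightarrow>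
            (\<exists>xt. xt \<in> (\<lambda>u. x0 + u) ` K \<and> orth_to (P5 *v (b - A *v xt)) (mat_image A K)
                  \<and> xm = P4 *v xt + Q3 *v (conj_transpose A *v b)
                  \<and> b - A *v xm = P5 *v (b - A *v xt)))"
proof -
  define CA where "CA = conj_transpose A"
  define CW where "CW = conj_transpose W"
  define G where "G = CW ** CA ** A ** W"
  define Mi where "Mi = matrix_inv G"
  have Q3v: "\<And>z. Q3 *v z = W *v (Mi *v (CW *v z))"
    unfolding Q3_def Mi_def G_def CW_def CA_def by (simp add: mv_assoc')
  have P4v: "\<And>z. P4 *v z = z - W *v (Mi *v (CW *v (CA *v (A *v z))))"
    unfolding P4_def by (simp add: mv_diff1 mv_assoc' Q3v CA_def)
  have P5v: "\<And>z. P5 *v z = z - A *v (W *v (Mi *v (CW *v (CA *v z))))"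
    unfolding P5_def by (simp add: mv_diff1 mv_assoc' Q3v CA_def)
  have Gv: "\<And>y. G *v y = CW *v (CA *v (A *v (W *v y)))"
    unfolding G_def by (simp add: mv_assoc')
  have Ginj: "\<forall>y. G *v y = 0 \<longrightarrow> y = 0"
  proof (intro allI impI)
    fix y assume "G *v y = 0"
    have "cinner (A *v (W *v y)) (A *v (W *v y)) = cinner (CW *v (CA *v (A *v (W *v y)))) y"
      unfolding CA_def CW_def by (simp only: ct_cinner2)
    also have "\<dots> = 0" using \<open>G *v y = 0\<close> Gv by (simp add: cinner_def)
    finally have "cinner (A *v (W *v y)) (A *v (W *v y)) = 0" .
    then have "A *v (W *v y) = 0" by (rule cinner_self_zero)
    then have "W *v y = 0"
      using inj_matrix_vector_mult[OF assms(1)] by (metis injD matrix_vector_mult_0_right)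
    then show "y = 0" using assms(2) by blast
  qed
  have "invertible G"
    using Ginj by (simp add: invertible_left_inverse matrix_left_invertible_ker)
  then have "G ** Mi = mat 1 \<and> Mi ** G = mat 1"
    unfolding Mi_def matrix_inv_def invertible_def by (rule someI_ex)
  then have GMi: "G ** Mi = mat 1" and MiG: "Mi ** G = mat 1" by auto
  have GM: "\<And>v. CW *v (CA *v (A *v (W *v (Mi *v v)))) = v"
  proof -
    fix v
    have "G *v (Mi *v v) = v" using GMi by (simp add: matrix_vector_mul_assoc)
    then show "CW *v (CA *v (A *v (W *v (Mi *v v)))) = v" by (simp add: Gv)
  qed
  have MG: "\<And>y. Mi *v (CW *v (CA *v (A *v (W *v y)))) = y"
  proof -
    fix y
    have "Mi *v (G *v y) = y" using MiG by (simp add: matrix_vector_mul_assoc)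
    then show "Mi *v (CW *v (CA *v (A *v (W *v y)))) = y" by (simp add: Gv)
  qed
  have E1: "\<And>x. b - A *v (P4 *v x + Q3 *v (CA *v b)) = P5 *v (b - A *v x)"
    by (simp add: P4v Q3v P5v matrix_vector_mult_diff_distrib matrix_vector_right_distrib algebra_simps)
  have E2: "\<And>z y. cinner (P5 *v z) (A *v (W *v y)) = 0"
  proof -
    fix z y
    have "cinner (P5 *v z) (A *v (W *v y)) = cinner (CW *v (CA *v (P5 *v z))) y"
      by (simp add: ct_cinner2 CA_def CW_def)
    also have "CW *v (CA *v (P5 *v z)) = 0"
      by (simp add: P5v matrix_vector_mult_diff_distrib GM)
    finally show "cinner (P5 *v z) (A *v (W *v y)) = 0" by simp
  qed
  have X: "\<And>x. P4 *v x + Q3 *v (CA *v b) = x + W *v (Mi *v (CW *v (CA *v (b - A *v x))))"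
    by (simp add: P4v Q3v matrix_vector_mult_diff_distrib matrix_vector_right_distrib algebra_simps)
  have K0: "0 \<in> K" unfolding K_def krylov_def by (rule vec.span_zero)
  show ?thesis
  proof (intro conjI allI impI)
    fix xt
    assume h: "xt \<in> (\<lambda>u. x0 + u) ` K \<and> orth_to (P5 *v (b - A *v xt)) (mat_image A K)"
    then obtain k where k: "k \<in> K" "xt = x0 + k" by auto
    define xm where "xm = P4 *v xt + Q3 *v (conj_transpose A *v b)"
    have r: "b - A *v xm = P5 *v (b - A *v xt)" unfolding xm_def using E1 CA_def by simp
    have "xm = x0 + (W *v (Mi *v (CW *v (CA *v (b - A *v xt)))) + k)"
      unfolding xm_def using X[of xt] k(2) CA_def by (simp add: algebra_simps)
    moreover have "W *v (Mi *v (CW *v (CA *v (b - A *v xt)))) + k \<in> set_plus_sub Wsp K"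
      unfolding set_plus_sub_def Wsp_def col_space_def using k(1) by blast
    ultimately have m1: "xm \<in> (\<lambda>u. x0 + u) ` set_plus_sub Wsp K"
      by (simp add: rev_image_eqI)
    have m2: "orth_to (b - A *v xm) (set_plus_sub (mat_image A Wsp) (mat_image A K))"
      unfolding orth_to_def
    proof
      fix v assume "v \<in> set_plus_sub (mat_image A Wsp) (mat_image A K)"
      then obtain y k' where v: "v = A *v (W *v y) + A *v k'" "k' \<in> K"
        unfolding set_plus_sub_def mat_image_def Wsp_def col_space_def by blast
      have "cinner (b - A *v xm) (A *v k') = 0"
        using h v(2) unfolding r orth_to_def mat_image_def by blast
      then show "cinner (b - A *v xm) v = 0"
        using v(1) r E2 by (simp add: cinner_add2)
    qed
    show "let xm = P4 *v xt + Q3 *v (conj_transpose A *v b) in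
              xm \<in> (\<lambda>u. x0 + u) ` set_plus_sub Wsp K
              \<and> orth_to (b - A *v xm) (set_plus_sub (mat_image A Wsp) (mat_image A K))
              \<and> b - A *v xm = P5 *v (b - A *v xt)"
      unfolding Let_def using m1 m2 r by (simp add: xm_def)
  next
    fix xm
    assume h: "xm \<in> (\<lambda>u. x0 + u) ` set_plus_sub Wsp K
               \<and> orth_to (b - A *v xm) (set_plus_sub (mat_image A Wsp) (mat_image A K))"
    then obtain y k where k: "k \<in> K" "xm = x0 + (W *v y + k)"
      unfolding set_plus_sub_def Wsp_def col_space_def by blast
    define r where "r = b - A *v xm"
    have orth: "\<And>v. v \<in> set_plus_sub (mat_image A Wsp) (mat_image A K) \<Longrightarrow> cinner r v = 0"
      using h unfolding orth_to_def r_def by blast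
    have oW: "\<And>y'. cinner r (A *v (W *v y')) = 0"
    proof -
      fix y'
      have "A *v (W *v y') + A *v 0 \<in> set_plus_sub (mat_image A Wsp) (mat_image A K)"
        unfolding set_plus_sub_def mat_image_def Wsp_def col_space_def using K0 by blast
      then show "cinner r (A *v (W *v y')) = 0" using orth by simp
    qed
    have "cinner (CW *v (CA *v r)) (CW *v (CA *v r)) = 0"
      using oW[of "CW *v (CA *v r)"] by (simp add: ct_cinner2 CA_def CW_def)
    then have z: "CW *v (CA *v r) = 0" by (rule cinner_self_zero)
    define xt where "xt = x0 + k"
    have rr: "r = (b - A *v xt) - A *v (W *v y)"
      unfolding r_def xt_def k(2) by (simp add: matrix_vector_right_distrib algebra_simps)
    have "CW *v (CA *v (b - A *v xt)) = CW *v (CA *v (A *v (W *v y)))"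
      using z unfolding rr by (simp add: matrix_vector_mult_diff_distrib)
    then have eqx: "xm = P4 *v xt + Q3 *v (conj_transpose A *v b)"
      using X[of xt] MG[of y] k(2) unfolding xt_def CA_def[symmetric] by (simp add: algebra_simps)
    have eqr: "b - A *v xm = P5 *v (b - A *v xt)"
      using eqx E1 CA_def by simp
    have o2: "orth_to (P5 *v (b - A *v xt)) (mat_image A K)"
      unfolding orth_to_def
    proof
      fix v assume "v \<in> mat_image A K"
      then obtain k' where v: "v = A *v k'" "k' \<in> K" unfolding mat_image_def by blast
      have "A *v (W *v 0) + A *v k' \<in> set_plus_sub (mat_image A Wsp) (mat_image A K)"
        unfolding set_plus_sub_def mat_image_def Wsp_def col_space_def using v(2) by blast
      then show "cinner (P5 *v (b - A *v xt)) v = 0"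
        using orth eqr v(1) unfolding r_def by simp
    qed
    show "\<exists>xt. xt \<in> (\<lambda>u. x0 + u) ` K \<and> orth_to (P5 *v (b - A *v xt)) (mat_image A K)
                  \<and> xm = P4 *v xt + Q3 *v (conj_transpose A *v b)
                  \<and> b - A *v xm = P5 *v (b - A *v xt)"
    proof (intro exI[of _ xt] conjI)
      show "xt \<in> (\<lambda>u. x0 + u) ` K" unfolding xt_def using k(1) by (rule imageI)
    qed (use o2 eqx eqr in \<open>simp_all\<close>)
  qed
qed

end
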